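(* Let $D\in\{D_1,D_2,\dots,D_8\}$. For every integer $v\geq 15$ with $v\equiv 1\pmod{14}$, there exists a $D$-decomposition of $K^*_v$.
   Context: $K^*_v$ denotes the complete symmetric digraph of order $v$: it contains both arcs $(x,y)$ and $(y,x)$ for every pair of distinct vertices $x,y$. A $D$-decomposition of a digraph $K$ is a set of subdigraphs of $K$, each isomorphic to $D$, such that every arc of $K$ lies in exactly one of them. For distinct vertices $v_0,\dots,v_6$, the digraphs $D_i[v_0,v_1,\dots,v_6]$ ($i\in[1,8]$) all have vertex set $\{v_0,\dots,v_6\}$ and the following arc sets: $D_1$: $(v_1,v_0),(v_1,v_2),(v_2,v_3),(v_3,v_4),(v_4,v_5),(v_5,v_6),(v_6,v_0)$; $D_2$: $(v_1,v_0),(v_2,v_1),(v_2,v_3),(v_3,v_4),(v_4,v_5),(v_5,v_6),(v_6,v_0)$; $D_3$: $(v_1,v_0),(v_1,v_2),(v_3,v_2),(v_3,v_4),(v_4,v_5),(v_5,v_6),(v_6,v_0)$; $D_4$: $(v_1,v_0),(v_1,v_2),(v_2,v_3),(v_4,v_3),(v_4,v_5),(v_5,v_6),(v_6,v_0)$; $D_5$: $(v_1,v_0),(v_2,v_1),(v_3,v_2),(v_3,v_4),(v_4,v_5),(v_5,v_6),(v_6,v_0)$; $D_6$: $(v_1,v_0),(v_2,v_1),(v_2,v_3),(v_3,v_4),(v_5,v_4),(v_5,v_6),(v_6,v_0)$; $D_7$: $(v_1,v_0),(v_1,v_2),(v_3,v_2),(v_3,v_4),(v_4,v_5),(v_6,v_5),(v_6,v_0)$;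 $D_8$: $(v_1,v_0),(v_2,v_1),(v_2,v_3),(v_4,v_3),(v_4,v_5),(v_5,v_6),(v_6,v_0)$. $D_i$ also denotes the isomorphism type of $D_i[v_0,\dots,v_6]$. *)

theory Defs
  imports Main
begin

definition Kstar :: "'a set \<Rightarrow> ('a \<times> 'a) set" where
  "Kstar V = {(x, y). x \<in> V \<and> y \<in> V \<and> x \<noteq> y}"

definition Darcs :: "nat \<Rightarrow> 'a list \<Rightarrow> ('a \<times> 'a) set" where
  "Darcs i vs = (let w = (\<lambda>k. vs ! k) in
    (if i = 1 then {(w 1, w 0), (w 1, w 2), (w 2, w 3), (w 3, w 4), (w 4, w 5), (w 5, w 6), (w 6, w 0)}
     else if i = 2 then {(w 1, w 0), (w 2, w 1), (w 2, w 3), (w 3, w 4), (w 4, w 5), (w 5, w 6), (w 6, w 0)}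
     else if i = 3 then {(w 1, w 0), (w 1, w 2), (w 3, w 2), (w 3, w 4), (w 4, w 5), (w 5, w 6), (w 6, w 0)}
     else if i = 4 then {(w 1, w 0), (w 1, w 2), (w 2, w 3), (w 4, w 3), (w 4, w 5), (w 5, w 6), (w 6, w 0)}
     else if i = 5 then {(w 1, w 0), (w 2, w 1), (w 3, w 2), (w 3, w 4), (w 4, w 5), (w 5, w 6), (w 6, w 0)}
     else if i = 6 then {(w 1, w 0), (w 2, w 1), (w 2, w 3), (w 3, w 4), (w 5, w 4), (w 5, w 6), (w 6, w 0)}
     else if i = 7 then {(w 1, w 0), (w 1, w 2), (w 3, w 2), (w 3, w 4), (w 4, w 5), (w 6, w 5), (w 6, w 0)}
     else if i = 8 then {(w 1, w 0), (w 2, w 1), (w 2, w 3), (w 4, w 3), (w 4, w 5), (w 5, w 6), (w 6, w 0)}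
     else {}))"

(* A subdigraph B of K (given by its arc set) is isomorphic to D_i iff
   B = D_i[v0,...,v6] for some distinct vertices v0..v6 (D_i has no isolated vertices,
   so its vertex set is determined by its arcs). *)
definition is_copy :: "nat \<Rightarrow> ('a \<times> 'a) set \<Rightarrow> bool" where
  "is_copy i B \<longleftrightarrow> (\<exists>vs. length vs = 7 \<and> distinct vs \<and> B = Darcs i vs)"

definition is_decomposition :: "nat \<Rightarrow> ('a \<times> 'a) set \<Rightarrow> ('a \<times> 'a) set set \<Rightarrow> bool" where
  "is_decomposition i K \<D> \<longleftrightarrow>
     (\<forall>B\<in>\<D>. B \<subseteq> K \<and> is_copy i B) \<and> (\<forall>e\<in>K. \<exists>!B. B \<in> \<D> \<and> e \<in> B)"

end

theory Submission
  imports Defs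
begin


definition pat :: "nat \<Rightarrow> (nat \<times> nat) list" where
  "pat i = (if i = 1 then [(1,0),(1,2),(2,3),(3,4),(4,5),(5,6),(6,0)]
     else if i = 2 then [(1,0),(2,1),(2,3),(3,4),(4,5),(5,6),(6,0)]
     else if i = 3 then [(1,0),(1,2),(3,2),(3,4),(4,5),(5,6),(6,0)]
     else if i = 4 then [(1,0),(1,2),(2,3),(4,3),(4,5),(5,6),(6,0)]
     else if i = 5 then [(1,0),(2,1),(3,2),(3,4),(4,5),(5,6),(6,0)]
     else if i = 6 then [(1,0),(2,1),(2,3),(3,4),(5,4),(5,6),(6,0)]
     else if i = 7 then [(1,0),(1,2),(3,2),(3,4),(4,5),(6,5),(6,0)]
     else [(1,0),(2,1),(2,3),(4,3),(4,5),(5,6),(6,0)])"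

lemma i_cases: "i \<in> {1..8::nat} \<Longrightarrow> i=1 \<or> i=2 \<or> i=3 \<or> i=4 \<or> i=5 \<or> i=6 \<or> i=7 \<or> i=8"
  by auto

lemma Darcs_pat: "i \<in> {1..8} \<Longrightarrow> Darcs i vs = (\<lambda>(p,q). (vs!p, vs!q)) ` set (pat i)"
  apply (drule i_cases)
  apply (elim disjE) by (simp_all add: Darcs_def pat_def Let_def)

lemma pat_distinct: "i \<in> {1..8} \<Longrightarrow> distinct (pat i) \<and> length (pat i) = 7"
  apply (drule i_cases)
  apply (elim disjE) by (simp_all add: pat_def)

lemma pat_bounds: "i \<in> {1..8} \<Longrightarrow> (p,q) \<in> set (pat i) \<Longrightarrow> p < 7 \<and> q < 7 \<and> p \<noteq> q"
  apply (drule i_cases)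
  apply (elim disjE) by (auto simp add: pat_def)

lemma less7: "(r::nat) < 7 \<longleftrightarrow> r=0 \<or> r=1 \<or> r=2 \<or> r=3 \<or> r=4 \<or> r=5 \<or> r=6"
  by auto

lemma pat_edges: "i \<in> {1..8} \<Longrightarrow> r < 7 \<Longrightarrow>
   (r, Suc r mod 7) \<in> set (pat i) \<or> (Suc r mod 7, r) \<in> set (pat i)"
  apply (drule i_cases) apply (simp only: less7)
  apply (elim disjE) by (simp_all add: pat_def)

lemma len7: "length xs = 7 \<Longrightarrow> \<exists>a0 a1 a2 a3 a4 a5 a6. xs = [a0,a1,a2,a3,a4,a5,a6]"
  apply (cases xs, simp) apply (rename_tac a0 t0, case_tac t0, simp)
  apply (rename_tac a1 t1, case_tac t1, simp)
  apply (rename_tac a2 t2, case_tac t2, simp)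
  apply (rename_tac a3 t3, case_tac t3, simp)
  apply (rename_tac a4 t4, case_tac t4, simp)
  apply (rename_tac a5 t5, case_tac t5, simp)
  apply (rename_tac a6 t6, case_tac t6, simp)
  by simp



definition cA :: "int \<Rightarrow> int \<Rightarrow> int \<Rightarrow> int list" where
  "cA h e j = [7*(2*h+e), 7*(2*h+e)+2*j+1, 8*(2*h+e)+2+3*j, 11*(2*h+e)+h+3+4*j,
     9*(2*h+e)+h+2+3*j, 5*(2*h+e)+h+1+2*j, j]"
definition cB :: "int \<Rightarrow> int \<Rightarrow> int \<Rightarrow> int list" where
  "cB h e j = [8*(2*h+e), 8*(2*h+e)+2*j+2, 7*(2*h+e)-h-e+1+j, 4*(2*h+e)-e,
     (2*h+e)-e-1-j, 5*(2*h+e)+h, h-1-j]"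
definition cc :: "int \<Rightarrow> int \<Rightarrow> int \<Rightarrow> int list" where
  "cc h e j = (if j < h+e then cA h e j else cB h e (j-(h+e)))"

lemma modV1: "0 \<le> u \<Longrightarrow> u < V \<Longrightarrow> x = u \<Longrightarrow> (x::int) mod V = u" by simp
lemma modV2: "0 \<le> u \<Longrightarrow> u < V \<Longrightarrow> x = u - V \<Longrightarrow> (x::int) mod V = u"
proof -
  assume a: "0 \<le> u" "u < V" "x = u - V"
  have "x = u + (-1)*V" using a by simp
  then have "x mod V = u mod V" by (simp only: mod_mult_self1)
  then show ?thesis using a by simp
qed

lemma hitA:
  assumes "0 \<le> h" "0 \<le> j" "j < h+e" "r < 7" "\<epsilon> \<in> {1,-1}"
    "(\<epsilon> * (cA h e j ! (Suc r mod 7) - cA h e j ! r)) mod (14*(2*h+e)+1) = u"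
  shows "\<exists>j\<in>{0..<2*h+e}. \<exists>r<7. \<exists>\<epsilon>\<in>{1,-1}. (\<epsilon> * (cc h e j ! (Suc r mod 7) - cc h e j ! r)) mod (14*(2*h+e)+1) = u"
  using assms by (intro bexI[of _ j] exI[of _ r]) (auto simp: cc_def)

lemma hitB:
  assumes "0 \<le> j" "j < h" "e \<ge> 0" "r < 7" "\<epsilon> \<in> {1,-1}"
    "(\<epsilon> * (cB h e j ! (Suc r mod 7) - cB h e j ! r)) mod (14*(2*h+e)+1) = u"
  shows "\<exists>j\<in>{0..<2*h+e}. \<exists>r<7. \<exists>\<epsilon>\<in>{1,-1}. (\<epsilon> * (cc h e j ! (Suc r mod 7) - cc h e j ! r)) mod (14*(2*h+e)+1) = u"
  using assms by (intro bexI[of _ "h+e+j"] exI[of _ r]) (auto simp: cc_def)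

lemma coverage:
  assumes h: "0 \<le> h" and e: "e = 0 \<or> e = 1" and K: "1 \<le> 2*h+e"
    and u: "1 \<le> u" "u \<le> 7*(2*h+e)"
  shows "\<exists>j\<in>{0..<2*h+e}. \<exists>r<7. \<exists>\<epsilon>\<in>{1,-1}. (\<epsilon> * (cc h e j ! (Suc r mod 7) - cc h e j ! r)) mod (14*(2*h+e)+1) = u"
proof -
  define K where "K = 2*h+e"
  have e01: "0 \<le> e" "e \<le> 1" using e by auto
  have C1: ?thesis if "u \<le> K" "u mod 2 = 1"
  proof -
      have uu: "u = 2*(u div 2) + 1" using that div_mult_mod_eq[of u 2] by linarith
    show ?thesis
      apply (rule hitA[of _ "u div 2" _ 0 "1"]) using that uu u K_def e01 h
      apply (simp_all add: cA_def) done
  qed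
  have C2: ?thesis if "u \<le> K" "u mod 2 = 0"
  proof -
      have uu: "u = 2*(u div 2)" using that div_mult_mod_eq[of u 2] by linarith
    show ?thesis
      apply (rule hitB[of "u div 2 - 1" _ _ 0 "1"]) using that uu u K_def e01 h
      apply (simp_all add: cB_def) done
  qed
  have C3: ?thesis if "K+1 \<le> u" "u \<le> K+h+e"
  proof -
    show ?thesis
      apply (rule hitA[of _ "u-K-1" _ 1 "1"]) using that u K_def e01 h
      apply (simp_all add: cA_def) done
  qed
  have C4: ?thesis if "K+h+e+1 \<le> u" "u \<le> 2*K"
  proof -
    show ?thesis
      apply (rule hitB[of "u-K-h-e-1" _ _ 1 "-1"]) using that u K_def e01 h
      apply (simp_all add: cB_def) done
  qed
  have C5: ?thesis if "2*K+1 \<le> u" "u \<le> 2*K+h+e"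
  proof -
    show ?thesis
      apply (rule hitA[of _ "u-2*K-1" _ 3 "-1"]) using that u K_def e01 h
      apply (simp_all add: cA_def) done
  qed
  have C6: ?thesis if "2*K+h+e+1 \<le> u" "u \<le> 3*K"
  proof -
    show ?thesis
      apply (rule hitB[of "u-2*K-h-e-1" _ _ 2 "-1"]) using that u K_def e01 h
      apply (simp_all add: cB_def) done
  qed
  have C7: ?thesis if "3*K+1 \<le> u" "u \<le> 3*K+h"
  proof -
    show ?thesis
      apply (rule hitB[of "u-3*K-1" _ _ 3 "-1"]) using that u K_def e01 h
      apply (simp_all add: cB_def) done
  qed
  have C8: ?thesis if "3*K+h+1 \<le> u" "u \<le> 4*K"
  proof -
    show ?thesis
      apply (rule hitA[of _ "u-3*K-h-1" _ 2 "1"]) using that u K_def e01 h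
      apply (simp_all add: cA_def) done
  qed
  have C9: ?thesis if "4*K+1 \<le> u" "u \<le> 4*K+h+e"
  proof -
    show ?thesis
      apply (rule hitA[of _ "u-4*K-1" _ 4 "-1"]) using that u K_def e01 h
      apply (simp_all add: cA_def) done
  qed
  have C10: ?thesis if "4*K+h+e+1 \<le> u" "u \<le> 5*K"
  proof -
    show ?thesis
      apply (rule hitB[of "u-4*K-h-e-1" _ _ 4 "1"]) using that u K_def e01 h
      apply (simp_all add: cB_def) done
  qed
  have C11: ?thesis if "5*K+1 \<le> u" "u \<le> 5*K+h"
  proof -
    show ?thesis
      apply (rule hitB[of "u-5*K-1" _ _ 5 "-1"]) using that u K_def e01 h
      apply (simp_all add: cB_def) done
  qed
  have C12: ?thesis if "5*K+h+1 \<le> u" "u \<le> 6*K"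
  proof -
    show ?thesis
      apply (rule hitA[of _ "u-5*K-h-1" _ 5 "-1"]) using that u K_def e01 h
      apply (simp_all add: cA_def) done
  qed
  have C13: ?thesis if "6*K+1 \<le> u" "u \<le> 6*K+h"
  proof -
    show ?thesis
      apply (rule hitB[of "6*K+h-u" _ _ 6 "-1"]) using that u K_def e01 h
      apply (simp_all add: cB_def) apply (rule modV2[where u=u]) using that h e01 K_def by simp_all
  qed
  have C14: ?thesis if "6*K+h+1 \<le> u" "u \<le> 7*K"
  proof -
    show ?thesis
      apply (rule hitA[of _ "7*K-u" _ 6 "1"]) using that u K_def e01 h
      apply (simp_all add: cA_def) done
  qed
  have S1: ?thesis if "u \<le> K" using C1 C2 that by (cases "u mod 2 = 1") auto
  have S3: ?thesis if "u \<le> K+h+e" using S1 C3 that by (cases "u \<le> K") auto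
  have S4: ?thesis if "u \<le> 2*K" using S3 C4 that by (cases "u \<le> K+h+e") auto
  have S5: ?thesis if "u \<le> 2*K+h+e" using S4 C5 that by (cases "u \<le> 2*K") auto
  have S6: ?thesis if "u \<le> 3*K" using S5 C6 that by (cases "u \<le> 2*K+h+e") auto
  have S7: ?thesis if "u \<le> 3*K+h" using S6 C7 that by (cases "u \<le> 3*K") auto
  have S8: ?thesis if "u \<le> 4*K" using S7 C8 that by (cases "u \<le> 3*K+h") auto
  have S9: ?thesis if "u \<le> 4*K+h+e" using S8 C9 that by (cases "u \<le> 4*K") auto
  have S10: ?thesis if "u \<le> 5*K" using S9 C10 that by (cases "u \<le> 4*K+h+e") auto
  have S11: ?thesis if "u \<le> 5*K+h" using S10 C11 that by (cases "u \<le> 5*K") auto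
  have S12: ?thesis if "u \<le> 6*K" using S11 C12 that by (cases "u \<le> 5*K+h") auto
  have S13: ?thesis if "u \<le> 6*K+h" using S12 C13 that by (cases "u \<le> 6*K") auto
  have S14: ?thesis if "u \<le> 7*K" using S13 C14 that by (cases "u \<le> 6*K+h") auto
  show ?thesis using S14 u K_def by simp
qed


lemma dvd_small_eq:
  fixes a b v :: int
  assumes "0 \<le> a" "a < v" "0 \<le> b" "b < v" "v dvd (a - b)"
  shows "a = b"
proof (rule ccontr)
  assume "a \<noteq> b"
  then have "a - b \<noteq> 0" by simp
  from dvd_imp_le_int[OF this assms(5)] have "\<bar>v\<bar> \<le> \<bar>a - b\<bar>" .
  then show False using assms by linarith
qed

lemma modV2': "0 \<le> u \<Longrightarrow> u < V \<Longrightarrow> (u - V) mod (V::int) = u"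
proof -
  assume a: "0 \<le> u" "u < V"
  have "u - V = u + (-1)*V" by simp
  then have "(u - V) mod V = u mod V" by (simp only: mod_mult_self1)
  then show ?thesis using a by simp
qed

lemma sgn_dvd: "(\<sigma>::int) \<in> {1,-1} \<Longrightarrow> v dvd \<sigma> * d \<Longrightarrow> v dvd d"
  by auto

definition gmap :: "nat \<Rightarrow> int \<Rightarrow> int \<Rightarrow> int \<Rightarrow> nat" where
  "gmap v \<sigma> t x = nat ((\<sigma>*x + t) mod int v)"

definition blk :: "nat \<Rightarrow> nat \<Rightarrow> (int \<Rightarrow> int list) \<Rightarrow> int \<times> int \<times> int \<Rightarrow> (nat \<times> nat) set" where
  "blk i v c = (\<lambda>(j,\<sigma>,t). Darcs i (map (gmap v \<sigma> t) (c j)))"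

definition FF :: "nat \<Rightarrow> (int \<Rightarrow> int list) \<Rightarrow> int \<times> int \<times> (nat \<times> nat) \<Rightarrow> int" where
  "FF v c = (\<lambda>(j,\<sigma>,(p,q)). (\<sigma> * (c j ! q - c j ! p)) mod int v)"

lemma gmap_lt: "0 < v \<Longrightarrow> gmap v \<sigma> t x < v"
  unfolding gmap_def by (simp add: nat_less_iff)

lemma gmap_int: "0 < v \<Longrightarrow> int (gmap v \<sigma> t x) = (\<sigma>*x + t) mod int v"
  unfolding gmap_def by simp

lemma decomp_from_base:
  fixes c :: "int \<Rightarrow> int list" and J :: "int set" and v i :: nat
  assumes i: "i \<in> {1..8}" and v: "0 < v" and fin: "finite J"
    and card: "v = 14 * card J + 1"
    and blocks: "\<And>j. j \<in> J \<Longrightarrow> length (c j) = 7 \<and> distinct (c j) \<and> (\<forall>x\<in>set (c j). 0 \<le> x \<and> x < int v)"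
    and cover: "\<And>u. 1 \<le> u \<Longrightarrow> u \<le> 7 * int (card J) \<Longrightarrow>
        \<exists>j\<in>J. \<exists>r<7. \<exists>\<epsilon>\<in>{1,-1}. (\<epsilon> * (c j ! (Suc r mod 7) - c j ! r)) mod int v = u"
  shows "\<exists>\<D> :: (nat \<times> nat) set set. is_decomposition i (Kstar {0..<v}) \<D>"
proof -
  define Dom where "Dom = J \<times> {1,-1::int} \<times> set (pat i)"
  define Tr where "Tr = J \<times> {1,-1::int} \<times> {0..<int v}"
  define \<D> where "\<D> = blk i v c ` Tr"
  have patd: "distinct (pat i)" "length (pat i) = 7" using pat_distinct[OF i] by auto
  have pb: "\<And>p q. (p,q) \<in> set (pat i) \<Longrightarrow> p < 7 \<and> q < 7 \<and> p \<noteq> q" using pat_bounds[OF i] by blast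
  have Vpos: "(0::int) < int v" using v by simp
  have Fsub: "FF v c ` Dom \<subseteq> {1..<int v}"
  proof
    fix z assume "z \<in> FF v c ` Dom"
    then obtain j \<sigma> p q where jj: "j \<in> J" "\<sigma> \<in> {1,-1}" "(p,q) \<in> set (pat i)" and z: "z = (\<sigma> * (c j ! q - c j ! p)) mod int v"
      unfolding Dom_def FF_def by auto
    have bl: "length (c j) = 7" "distinct (c j)" "\<forall>x\<in>set (c j). 0 \<le> x \<and> x < int v" using blocks[OF jj(1)] by auto
    have pq: "p < 7" "q < 7" "p \<noteq> q" using pb[OF jj(3)] by auto
    have ne: "c j ! q \<noteq> c j ! p" using bl pq by (simp add: nth_eq_iff_index_eq)
    have inr: "0 \<le> c j ! q" "c j ! q < int v" "0 \<le> c j ! p" "c j ! p < int v"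
      using bl(3) pq bl(1) by (auto simp: nth_mem)
    have "z \<noteq> 0"
    proof
      assume "z = 0"
      then have "int v dvd \<sigma> * (c j ! q - c j ! p)" using z by (simp add: mod_eq_0_iff_dvd)
      then have "int v dvd (c j ! q - c j ! p)" using sgn_dvd[OF jj(2)] by blast
      then show False using dvd_small_eq[OF inr] ne by blast
    qed
    moreover have "0 \<le> z" "z < int v" using z Vpos by auto
    ultimately show "z \<in> {1..<int v}" by auto
  qed
  have Fsup: "{1..<int v} \<subseteq> FF v c ` Dom"
  proof
    fix \<delta> assume d: "\<delta> \<in> {1..<int v}"
    define u where "u = (if \<delta> \<le> 7 * int (card J) then \<delta> else int v - \<delta>)"
    have u1: "1 \<le> u" "u \<le> 7 * int (card J)" using d card unfolding u_def by auto
    obtain j r \<epsilon> where jr: "j \<in> J" "r < 7" "\<epsilon> \<in> {1,-1}"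
      and eq: "(\<epsilon> * (c j ! (Suc r mod 7) - c j ! r)) mod int v = u"
      using cover[OF u1] by blast
    obtain \<epsilon>' where e': "\<epsilon>' \<in> {1,-1::int}" "(\<epsilon>' * (c j ! (Suc r mod 7) - c j ! r)) mod int v = \<delta>"
    proof (cases "\<delta> \<le> 7 * int (card J)")
      case True then show ?thesis using that[of \<epsilon>] jr eq u_def by auto
    next
      case False
      then have uu: "u = int v - \<delta>" using u_def by simp
      have "((-\<epsilon>) * (c j ! (Suc r mod 7) - c j ! r)) mod int v = (- (\<epsilon> * (c j ! (Suc r mod 7) - c j ! r))) mod int v"
        by simp
      also have "\<dots> = (- ((\<epsilon> * (c j ! (Suc r mod 7) - c j ! r)) mod int v)) mod int v"
        by (simp add: mod_minus_eq)
      also have "\<dots> = (\<delta> - int v) mod int v" using eq uu by simp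
      also have "\<dots> = \<delta>" using d by (intro modV2') auto
      finally show ?thesis using that[of "-\<epsilon>"] jr by auto
    qed
    have "(r, Suc r mod 7) \<in> set (pat i) \<or> (Suc r mod 7, r) \<in> set (pat i)" using pat_edges[OF i jr(2)] .
    then show "\<delta> \<in> FF v c ` Dom"
    proof
      assume a: "(r, Suc r mod 7) \<in> set (pat i)"
      have "FF v c (j, \<epsilon>', (r, Suc r mod 7)) = \<delta>" using e' unfolding FF_def by simp
      moreover have "(j, \<epsilon>', (r, Suc r mod 7)) \<in> Dom" using a jr e' unfolding Dom_def by auto
      ultimately show ?thesis by force
    next
      assume a: "(Suc r mod 7, r) \<in> set (pat i)"
      have "FF v c (j, -\<epsilon>', (Suc r mod 7, r)) = \<delta>" using e' unfolding FF_def by (simp add: algebra_simps)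
      moreover have "(j, -\<epsilon>', (Suc r mod 7, r)) \<in> Dom" using a jr e' unfolding Dom_def by auto
      ultimately show ?thesis by force
    qed
  qed
  have Fimg: "FF v c ` Dom = {1..<int v}" using Fsub Fsup by blast
  have finDom: "finite Dom" unfolding Dom_def using fin by simp
  have cardDom: "card Dom = card J * 2 * 7"
    unfolding Dom_def using patd by (simp add: card_cartesian_product distinct_card)
  have "card {1..<int v} = v - 1" by simp
  then have "card (FF v c ` Dom) = card Dom" using Fimg cardDom card by simp
  then have inj: "inj_on (FF v c) Dom" using eq_card_imp_inj_on[OF finDom] by blast
  have mem: "\<And>j \<sigma> t x y. j \<in> J \<Longrightarrow> (x, y) \<in> blk i v c (j,\<sigma>,t) \<Longrightarrow>
      \<exists>p q. (p,q) \<in> set (pat i) \<and> x = gmap v \<sigma> t (c j ! p) \<and> y = gmap v \<sigma> t (c j ! q)"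
  proof -
    fix j \<sigma> t x y assume jJ: "j \<in> J" and xy: "(x, y) \<in> blk i v c (j,\<sigma>,t)"
    then obtain p q where pq: "(p,q) \<in> set (pat i)" "(x,y) = (map (gmap v \<sigma> t) (c j) ! p, map (gmap v \<sigma> t) (c j) ! q)"
      unfolding blk_def Darcs_pat[OF i] by auto
    moreover have "p < 7" "q < 7" using pb pq(1) by auto
    moreover have "length (c j) = 7" using blocks[OF jJ] by auto
    ultimately show "\<exists>p q. (p,q) \<in> set (pat i) \<and> x = gmap v \<sigma> t (c j ! p) \<and> y = gmap v \<sigma> t (c j ! q)"
      by auto
  qed
  have part1: "\<forall>B\<in>\<D>. B \<subseteq> Kstar {0..<v} \<and> is_copy i B"
  proof
    fix B assume "B \<in> \<D>"
    then obtain j \<sigma> t where jst: "j \<in> J" "\<sigma> \<in> {1,-1}" "t \<in> {0..<int v}" and B: "B = blk i v c (j,\<sigma>,t)"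
      unfolding \<D>_def Tr_def by blast
    define vs where "vs = map (gmap v \<sigma> t) (c j)"
    have bl: "length (c j) = 7" "distinct (c j)" "\<forall>x\<in>set (c j). 0 \<le> x \<and> x < int v" using blocks[OF jst(1)] by auto
    have injg: "inj_on (gmap v \<sigma> t) (set (c j))"
    proof (rule inj_onI)
      fix a b assume a: "a \<in> set (c j)" and b: "b \<in> set (c j)" and ab: "gmap v \<sigma> t a = gmap v \<sigma> t b"
      then have "(\<sigma>*a + t) mod int v = (\<sigma>*b + t) mod int v" using gmap_int[OF v] by metis
      then have "int v dvd (\<sigma>*a + t) - (\<sigma>*b + t)" by (simp add: mod_eq_dvd_iff)
      then have "int v dvd \<sigma> * (a - b)" by (simp add: algebra_simps)
      then have "int v dvd (a - b)" using sgn_dvd[OF jst(2)] by blast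
      then show "a = b" using dvd_small_eq[of a "int v" b] a b bl(3) by auto
    qed
    have lv: "length vs = 7" and dv: "distinct vs" using bl injg unfolding vs_def by (auto simp: distinct_map)
    have Bv: "B = Darcs i vs" using B unfolding blk_def vs_def by simp
    have "B \<subseteq> Kstar {0..<v}"
    proof
      fix z assume "z \<in> B"
      then obtain p q where pq: "(p,q) \<in> set (pat i)" "z = (vs ! p, vs ! q)"
        using \<open>z \<in> B\<close> unfolding Bv Darcs_pat[OF i] by auto
      have p7: "p < 7" "q < 7" "p \<noteq> q" using pb pq(1) by auto
      have "vs ! p \<noteq> vs ! q" using dv lv p7 by (simp add: nth_eq_iff_index_eq)
      moreover have "vs ! p < v" "vs ! q < v" using p7 bl(1) gmap_lt[OF v] unfolding vs_def by auto
      ultimately show "z \<in> Kstar {0..<v}" using pq(2) unfolding Kstar_def by auto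
    qed
    moreover have "is_copy i B" unfolding is_copy_def using lv dv Bv by blast
    ultimately show "B \<subseteq> Kstar {0..<v} \<and> is_copy i B" by blast
  qed
  have part2: "\<forall>z\<in>Kstar {0..<v}. \<exists>!B. B \<in> \<D> \<and> z \<in> B"
  proof
    fix z assume "z \<in> Kstar {0..<v}"
    then obtain x y where z: "z = (x,y)" and xy: "x < v" "y < v" "x \<noteq> y" unfolding Kstar_def by auto
    define \<delta> where "\<delta> = (int y - int x) mod int v"
    have "\<delta> \<noteq> 0"
    proof
      assume "\<delta> = 0"
      then have "int v dvd int y - int x" unfolding \<delta>_def by (simp add: mod_eq_0_iff_dvd)
      then have "int y = int x" using dvd_small_eq[of "int y" "int v" "int x"] xy by auto
      then show False using xy by simp
    qed
    moreover have "0 \<le> \<delta>" "\<delta> < int v" using Vpos unfolding \<delta>_def by simp_all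
    ultimately have "\<delta> \<in> {1..<int v}" by auto
    then obtain j \<sigma> p q where jd: "(j,\<sigma>,(p,q)) \<in> Dom" and Fj: "FF v c (j,\<sigma>,(p,q)) = \<delta>"
      using Fsup by (metis (no_types, lifting) imageE prod_cases3 subsetD surj_pair)
    have jJ: "j \<in> J" and sg: "\<sigma> \<in> {1,-1}" and pqi: "(p,q) \<in> set (pat i)" using jd unfolding Dom_def by auto
    have Fd: "(\<sigma> * (c j ! q - c j ! p)) mod int v = \<delta>" using Fj unfolding FF_def by simp
    define t where "t = (int x - \<sigma> * c j ! p) mod int v"
    have tr: "(j,\<sigma>,t) \<in> Tr" unfolding Tr_def t_def using jJ sg Vpos by auto
    have gx: "gmap v \<sigma> t (c j ! p) = x"
    proof -
      have "int (gmap v \<sigma> t (c j ! p)) = (\<sigma> * c j ! p + t) mod int v" using gmap_int[OF v] .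
      also have "\<dots> = (\<sigma> * c j ! p + (int x - \<sigma> * c j ! p)) mod int v" unfolding t_def by (simp add: mod_add_right_eq)
      also have "\<dots> = int x" using xy by simp
      finally show ?thesis by simp
    qed
    have gy: "gmap v \<sigma> t (c j ! q) = y"
    proof -
      have "int (gmap v \<sigma> t (c j ! q)) = (\<sigma> * c j ! q + t) mod int v" using gmap_int[OF v] .
      also have "\<dots> = (\<sigma> * (c j ! q - c j ! p) + int x) mod int v" unfolding t_def
        by (simp add: mod_add_right_eq algebra_simps)
      also have "\<dots> = ((\<sigma> * (c j ! q - c j ! p)) mod int v + int x) mod int v" by (simp add: mod_add_left_eq)
      also have "\<dots> = ((int y - int x) mod int v + int x) mod int v" using Fd \<delta>_def by simp
      also have "\<dots> = int y" using xy by (simp add: mod_add_left_eq)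
      finally show ?thesis by simp
    qed
    have lj: "length (c j) = 7" using blocks[OF jJ] by auto
    have p7: "p < 7" "q < 7" using pb pqi by auto
    have inB: "(x,y) \<in> blk i v c (j,\<sigma>,t)"
      unfolding blk_def Darcs_pat[OF i] using pqi gx gy lj p7
      by (auto intro!: image_eqI[of _ _ "(p,q)"])
    show "\<exists>!B. B \<in> \<D> \<and> z \<in> B"
    proof (rule ex1I[of _ "blk i v c (j,\<sigma>,t)"])
      show "blk i v c (j,\<sigma>,t) \<in> \<D> \<and> z \<in> blk i v c (j,\<sigma>,t)" using tr inB z unfolding \<D>_def by auto
    next
      fix B assume BB: "B \<in> \<D> \<and> z \<in> B"
      then obtain w where w: "w \<in> Tr" "B = blk i v c w" unfolding \<D>_def by blast
      obtain j' \<sigma>' t' where ww: "w = (j',\<sigma>',t')" by (cases w) auto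
      have tr': "(j',\<sigma>',t') \<in> Tr" and B: "B = blk i v c (j',\<sigma>',t')" and zB: "(x,y) \<in> B"
        using w ww BB z by auto
      have jJ': "j' \<in> J" and sg': "\<sigma>' \<in> {1,-1}" and t'r: "0 \<le> t'" "t' < int v" using tr' unfolding Tr_def by auto
      obtain p' q' where pq': "(p',q') \<in> set (pat i)" and x': "x = gmap v \<sigma>' t' (c j' ! p')"
        and y': "y = gmap v \<sigma>' t' (c j' ! q')" using mem[OF jJ'] zB B by blast
      have "FF v c (j',\<sigma>',(p',q')) = ((\<sigma>' * c j' ! q' + t') - (\<sigma>' * c j' ! p' + t')) mod int v"
        unfolding FF_def by (simp add: algebra_simps)
      also have "\<dots> = ((\<sigma>' * c j' ! q' + t') mod int v - (\<sigma>' * c j' ! p' + t') mod int v) mod int v"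
        by (simp add: mod_diff_eq)
      also have "\<dots> = (int y - int x) mod int v" using x' y' gmap_int[OF v] by simp
      finally have "FF v c (j',\<sigma>',(p',q')) = FF v c (j,\<sigma>,(p,q))" using Fj \<delta>_def by simp
      moreover have "(j',\<sigma>',(p',q')) \<in> Dom" using jJ' sg' pq' unfolding Dom_def by auto
      ultimately have same: "(j',\<sigma>',(p',q')) = (j,\<sigma>,(p,q))" using inj jd unfolding inj_on_def by blast
      then have "(\<sigma> * c j ! p + t') mod int v = (\<sigma> * c j ! p + t) mod int v"
        using x' gx gmap_int[OF v] by (metis prod.inject)
      then have "int v dvd t' - t" by (simp add: mod_eq_dvd_iff)
      moreover have "0 \<le> t" "t < int v" unfolding t_def using Vpos by auto
      ultimately have "t' = t" using dvd_small_eq[of t' "int v" t] t'r by auto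
      then show "B = blk i v c (j,\<sigma>,t)" using B same by simp
    qed
  qed
  show ?thesis using part1 part2 unfolding is_decomposition_def by blast
qed


lemma cc_props:
  assumes h: "0 \<le> h" and e: "e = 0 \<or> e = 1" and j: "0 \<le> j" "j < 2*h+e"
  shows "length (cc h e j) = 7 \<and> distinct (cc h e j) \<and> (\<forall>x\<in>set (cc h e j). 0 \<le> x \<and> x < 14*(2*h+e)+1)"
proof (cases "j < h+e")
  case True
  then show ?thesis using h e j by (auto simp: cc_def cA_def)
next
  case False
  then have "0 \<le> j-(h+e)" "j-(h+e) < h" using j by auto
  then show ?thesis using False h e j by (auto simp: cc_def cB_def)
qed

theorem lemma3p3:
  fixes i v :: nat
  assumes "i \<in> {1..8}" and "v \<ge> 15" and "v mod 14 = 1"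
  shows "\<exists>\<D> :: (nat \<times> nat) set set. is_decomposition i (Kstar {0..<v}) \<D>"
proof -
  define k where "k = v div 14"
  have vk0: "v = 14*k + v mod 14" using div_mult_mod_eq[of v 14] unfolding k_def by linarith
  have vk: "v = 14*k+1" "1 \<le> k" using vk0 assms(2,3) by linarith+
  define h where "h = int (k div 2)"
  define e where "e = int (k mod 2)"
  have ke0: "k = 2*(k div 2) + k mod 2" using div_mult_mod_eq[of k 2] by linarith
  have ke: "int k = 2*h+e" unfolding h_def e_def using ke0 by linarith
  have h0: "0 \<le> h" unfolding h_def by simp
  have e01: "e = 0 \<or> e = 1" unfolding e_def by auto
  define J where "J = {0..<2*h+e}"
  have cJ: "card J = k" unfolding J_def using ke by simp
  have iv: "int v = 14*(2*h+e)+1" using vk ke by simp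
  show ?thesis
  proof (rule decomp_from_base[where c="cc h e" and J=J])
    show "i \<in> {1..8}" by fact
    show "0 < v" using vk by simp
    show "finite J" unfolding J_def by simp
    show "v = 14 * card J + 1" using cJ vk by simp
    fix j assume "j \<in> J"
    then show "length (cc h e j) = 7 \<and> distinct (cc h e j) \<and> (\<forall>x\<in>set (cc h e j). 0 \<le> x \<and> x < int v)"
      using cc_props[OF h0 e01, of j] iv unfolding J_def by auto
  next
    fix u :: int assume u: "1 \<le> u" "u \<le> 7 * int (card J)"
    have "1 \<le> 2*h+e" using vk ke by simp
    then show "\<exists>j\<in>J. \<exists>r<7. \<exists>\<epsilon>\<in>{1,-1}. (\<epsilon> * (cc h e j ! (Suc r mod 7) - cc h e j ! r)) mod int v = u"
      using coverage[OF h0 e01 _ u(1)] u(2) cJ ke iv unfolding J_def by simp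
  qed
qed

end
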